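(* Let $\Phi=\bigwedge_{i=1}^m f_i\mid g_i$ be a system of divisibility constraints in $d$ variables with the elimination property for a total order $\preceq$ of its variables. Then (i) $|\Delta(\Phi)|\le 2m^2(d+2)$, and (ii) every coefficient and constant of every polynomial in $\Delta(\Phi)$ has bit length at most $(d+2)(\langle\|\Phi\|_\infty\rangle+1)$, i.e. $\langle\|\Delta(\Phi)\|_\infty\rangle\le(d+2)(\langle\|\Phi\|_\infty\rangle+1)$.
   Context: Linear polynomials: $f=a_1x_1+\dots+a_dx_d+c$ with integer coefficients; $\gcd(f)=\gcd(a_1,\dots,a_d,c)$; $f$ is primitive if $f\ne0$ and $\gcd(f)=1$; the primitive part of a non-zero $g$ is the unique primitive $f$ with $g=\gcd(g)f$. A system of divisibility constraints is $\Phi=\bigwedge_{i=1}^m f_i\mid g_i$ with $m\ge1$, linear $f_i\ne0$, $g_i$; $\mathrm{terms}(\Phi)=\{f_i,g_i\}$. Divisibility module: for primitive $f$, $M_f(\Phi)$ is the smallest set of linear polynomials containing $f$, closed under integer linear combinations, and such that whenever $g\mid h$ is a constraint of $\Phi$ and $b\cdot g\in M_f(\Phi)$ for some $b\in\mathbb Z$, then $b\cdot h\in M_f(\Phi)$. Leading variable: for a total order $x_1\preceq\dots\preceq x_d$, $\mathrm{lv}(f)$ is the largest variable with non-zero coefficient in $f$, and $\mathrm{lv}(f)=\bot=:x_0$ for constant $f$. Elimination property for $\preceq$: for every primitive part $f$ of a polynomial appearing as a left-hand side in $\Phi$ and every $0\le k\le d$, the set $\{g:\mathrm{lv}(g)\preceq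 x_k\text{ and } f\mid g\text{ appears in }\Phi\}$ is a linearly independent set forming a basis of $M_f(\Phi)\cap\mathbb Z[x_1,\dots,x_k]$. S-polynomials: for $f,g$ with $\mathrm{lv}(f)=x_l$, $\mathrm{lv}(g)=x_k$, $S(f,g)=b_k f-a_l g$ where $a_l$ is the coefficient of $x_l$ in $f$ and $b_k$ that of $x_k$ in $g$ (if $f$ is constant, $a_l:=f$; if $g$ is constant, $b_k:=g$). For primitive $f$, $\Delta_f(\Phi)$ is the smallest set containing $\mathrm{terms}(\Phi)$ such that whenever $f\mid g$ occurs in $\Phi$ and $h\in\Delta_f(\Phi)$ with $\mathrm{lv}(g)=\mathrm{lv}(h)$, then $S(g,h)\in\Delta_f(\Phi)$; $\Delta(\Phi)$ is the union of $\Delta_f(\Phi)$ over all primitive parts $f$ of polynomials in $\mathrm{terms}(\Phi)$. $\|\cdot\|_\infty$ of a set of polynomials is the maximum absolute value of their coefficients and constants; $\langle a\rangle=1+\lceil\log_2(|a|+1)\rceil$. *)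

theory Defs
  imports Complex_Main
begin

text \<open>Linear polynomials in the variables x_1..x_d with integer coefficients are
represented as functions f :: nat => int, where f 0 is the constant term,
f i (1 <= i <= d) is the coefficient of x_i, and f i = 0 for i > d.
A total order on the variables is given by a rank function rk, a bijection of
{1..d} onto itself: x_i precedes x_j iff rk i <= rk j.  The bottom element
x_0 (for constants) is encoded by the index 0.\<close>

type_synonym lin = "nat \<Rightarrow> int"

definition in_vars :: "nat \<Rightarrow> lin \<Rightarrow> bool" where
  "in_vars d f \<longleftrightarrow> (\<forall>i>d. f i = 0)"

definition content :: "nat \<Rightarrow> lin \<Rightarrow> int" where
  "content d f = Gcd (f ` {0..d})"

definition primitive :: "nat \<Rightarrow> lin \<Rightarrow> bool" where
  "primitive d f \<longleftrightarrow> f \<noteq> (\<lambda>_. 0) \<and> content d f = 1"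

definition prim_part :: "nat \<Rightarrow> lin \<Rightarrow> lin" where
  "prim_part d g = (\<lambda>i. g i div content d g)"

text \<open>Systems of divisibility constraints: list of pairs (f_i, g_i) meaning f_i | g_i.\<close>
type_synonym system = "(lin \<times> lin) list"

definition terms :: "system \<Rightarrow> lin set" where
  "terms \<Phi> = fst ` set \<Phi> \<union> snd ` set \<Phi>"

definition lhs_polys :: "system \<Rightarrow> lin set" where
  "lhs_polys \<Phi> = fst ` set \<Phi>"

definition wf_system :: "nat \<Rightarrow> system \<Rightarrow> bool" where
  "wf_system d \<Phi> \<longleftrightarrow> length \<Phi> \<ge> 1 \<and> (\<forall>(f, g) \<in> set \<Phi>. f \<noteq> (\<lambda>_. 0) \<and> in_vars d f \<and> in_vars d g)"

inductive_set divmod :: "system \<Rightarrow> lin \<Rightarrow> lin set" for \<Phi> f where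
  base: "f \<in> divmod \<Phi> f"
| zero: "(\<lambda>_. 0) \<in> divmod \<Phi> f"
| add: "p \<in> divmod \<Phi> f \<Longrightarrow> q \<in> divmod \<Phi> f \<Longrightarrow> (\<lambda>i. p i + q i) \<in> divmod \<Phi> f"
| smult: "p \<in> divmod \<Phi> f \<Longrightarrow> (\<lambda>i. c * p i) \<in> divmod \<Phi> f"
| divc: "(g, h) \<in> set \<Phi> \<Longrightarrow> (\<lambda>i. b * g i) \<in> divmod \<Phi> f \<Longrightarrow> (\<lambda>i. b * h i) \<in> divmod \<Phi> f"

definition lv :: "(nat \<Rightarrow> nat) \<Rightarrow> nat \<Rightarrow> lin \<Rightarrow> nat" where
  "lv rk d f = (if \<forall>i\<in>{1..d}. f i = 0 then 0
     else (THE i. i \<in> {1..d} \<and> f i \<noteq> 0 \<and> (\<forall>j\<in>{1..d}. f j \<noteq> 0 \<longrightarrow> rk j \<le> rk i)))"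

definition lv_rank :: "(nat \<Rightarrow> nat) \<Rightarrow> nat \<Rightarrow> lin \<Rightarrow> nat" where
  "lv_rank rk d f = (if lv rk d f = 0 then 0 else rk (lv rk d f))"

text \<open>coefficient of the leading variable; the constant itself if f is constant\<close>
definition lc :: "(nat \<Rightarrow> nat) \<Rightarrow> nat \<Rightarrow> lin \<Rightarrow> int" where
  "lc rk d f = f (lv rk d f)"

definition spoly :: "(nat \<Rightarrow> nat) \<Rightarrow> nat \<Rightarrow> lin \<Rightarrow> lin \<Rightarrow> lin" where
  "spoly rk d f g = (\<lambda>i. lc rk d g * f i - lc rk d f * g i)"

definition int_span :: "lin set \<Rightarrow> lin set" where
  "int_span S = {h. \<exists>c. h = (\<lambda>i. \<Sum>g\<in>S. c g * g i)}"

definition lin_indep :: "lin set \<Rightarrow> bool" where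
  "lin_indep S \<longleftrightarrow> (\<forall>c. (\<forall>i. (\<Sum>g\<in>S. c g * g i) = 0) \<longrightarrow> (\<forall>g\<in>S. c g = 0))"

text \<open>Z[x_1,...,x_k]: polynomials in the k smallest variables of the order\<close>
definition poly_upto :: "(nat \<Rightarrow> nat) \<Rightarrow> nat \<Rightarrow> nat \<Rightarrow> lin set" where
  "poly_upto rk d k = {g. in_vars d g \<and> (\<forall>i\<in>{1..d}. rk i > k \<longrightarrow> g i = 0)}"

definition elimination_property :: "(nat \<Rightarrow> nat) \<Rightarrow> nat \<Rightarrow> system \<Rightarrow> bool" where
  "elimination_property rk d \<Phi> \<longleftrightarrow>
    (\<forall>f \<in> prim_part d ` lhs_polys \<Phi>. \<forall>k \<le> d.
       (let S = {g. lv_rank rk d g \<le> k \<and> (f, g) \<in> set \<Phi>} in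
          lin_indep S \<and> int_span S = divmod \<Phi> f \<inter> poly_upto rk d k))"

inductive_set Delta_f :: "(nat \<Rightarrow> nat) \<Rightarrow> nat \<Rightarrow> system \<Rightarrow> lin \<Rightarrow> lin set"
  for rk d \<Phi> f where
  tm: "t \<in> terms \<Phi> \<Longrightarrow> t \<in> Delta_f rk d \<Phi> f"
| spol: "(f, g) \<in> set \<Phi> \<Longrightarrow> h \<in> Delta_f rk d \<Phi> f \<Longrightarrow> lv rk d g = lv rk d h
         \<Longrightarrow> spoly rk d g h \<in> Delta_f rk d \<Phi> f"

definition Delta :: "(nat \<Rightarrow> nat) \<Rightarrow> nat \<Rightarrow> system \<Rightarrow> lin set" where
  "Delta rk d \<Phi> = (\<Union>f \<in> prim_part d ` {t \<in> terms \<Phi>. t \<noteq> (\<lambda>_. 0)}. Delta_f rk d \<Phi> f)"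

definition norm_inf :: "nat \<Rightarrow> lin set \<Rightarrow> int" where
  "norm_inf d P = Max ({\<bar>p i\<bar> | p i. p \<in> P \<and> i \<le> d} \<union> {0})"

definition bitlen :: "int \<Rightarrow> int" where
  "bitlen a = 1 + \<lceil>log 2 (real_of_int \<bar>a\<bar> + 1)\<rceil>"

end

theory Submission
  imports Defs
begin


lemma lv_char:
  assumes inj: "inj_on rk {1..d}" and nz: "\<exists>i\<in>{1..d}. f i \<noteq> 0"
  shows "lv rk d f \<in> {1..d} \<and> f (lv rk d f) \<noteq> 0 \<and> (\<forall>j\<in>{1..d}. f j \<noteq> 0 \<longrightarrow> rk j \<le> rk (lv rk d f))"
proof -
  let ?A = "{j\<in>{1..d}. f j \<noteq> 0}"
  have fin: "finite (rk ` ?A)" by simp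
  have ne: "rk ` ?A \<noteq> {}" using nz by blast
  from Max_in[OF fin ne] obtain i where i1: "i \<in> ?A" and i2: "Max (rk ` ?A) = rk i" by (rule imageE)
  have i: "i \<in> ?A" "rk i = Max (rk ` ?A)" using i1 i2 by simp_all
  have le: "rk j \<le> rk i" if "j \<in> {1..d}" "f j \<noteq> 0" for j
  proof -
    have "rk j \<in> rk ` ?A" using that by blast
    then show ?thesis using Max_ge[OF fin] i(2) by simp
  qed
  have P: "i \<in> {1..d} \<and> f i \<noteq> 0 \<and> (\<forall>j\<in>{1..d}. f j \<noteq> 0 \<longrightarrow> rk j \<le> rk i)"
    using i(1) le by blast
  have U: "i' = i" if "i' \<in> {1..d} \<and> f i' \<noteq> 0 \<and> (\<forall>j\<in>{1..d}. f j \<noteq> 0 \<longrightarrow> rk j \<le> rk i')" for i'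
  proof -
    have "rk i' \<le> rk i" using le that by blast
    moreover have "rk i \<le> rk i'" using that P by blast
    ultimately have "rk i' = rk i" by simp
    then show ?thesis using inj that P by (simp add: inj_on_eq_iff)
  qed
  have nz': "\<not> (\<forall>i\<in>{1..d}. f i = 0)" using nz by blast
  have "lv rk d f = (THE i. i \<in> {1..d} \<and> f i \<noteq> 0 \<and> (\<forall>j\<in>{1..d}. f j \<noteq> 0 \<longrightarrow> rk j \<le> rk i))"
    unfolding lv_def using nz' by (simp only: if_False)
  also have "\<dots> = i" by (rule the_equality) (rule P, rule U)
  finally show ?thesis using P by simp
qed

lemma lv_zero: "\<forall>i\<in>{1..d}. f i = 0 \<Longrightarrow> lv rk d f = 0"
  unfolding lv_def by simp

lemma lv_rank_le_iff:
  assumes inj: "inj_on rk {1..d}"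
  shows "lv_rank rk d f \<le> k \<longleftrightarrow> (\<forall>i\<in>{1..d}. rk i > k \<longrightarrow> f i = 0)"
proof (cases "\<forall>i\<in>{1..d}. f i = 0")
  case True
  then show ?thesis by (simp add: lv_rank_def lv_zero)
next
  case False
  then have nz: "\<exists>i\<in>{1..d}. f i \<noteq> 0" by auto
  from lv_char[OF inj nz] have c: "lv rk d f \<in> {1..d}" "f (lv rk d f) \<noteq> 0"
    "\<forall>j\<in>{1..d}. f j \<noteq> 0 \<longrightarrow> rk j \<le> rk (lv rk d f)" by auto
  then have "lv_rank rk d f = rk (lv rk d f)" by (auto simp: lv_rank_def)
  then show ?thesis using c by (metis le_trans not_le)
qed

lemma prim_part_idem:
  assumes "in_vars d t" "t \<noteq> (\<lambda>_. 0)"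
  shows "prim_part d (prim_part d t) = prim_part d t"
proof -
  define c where "c = content d t"
  have "\<exists>i\<le>d. t i \<noteq> 0" using assms unfolding in_vars_def by (metis not_le)
  then have c0: "c \<noteq> 0" unfolding c_def content_def by (force simp: Gcd_0_iff image_subset_iff)
  have cdvd: "c dvd t i" if "i \<le> d" for i unfolding c_def content_def using that by auto
  define D where "D = content d (prim_part d t)"
  have "D * c dvd t i" if "i \<le> d" for i
  proof -
    have "D dvd t i div c" unfolding D_def content_def prim_part_def
      using that by (simp add: c_def content_def)
    then show ?thesis using cdvd[OF that] by (metis dvd_div_iff_mult c0 mult.commute)
  qed
  then have "D * c dvd Gcd (t ` {0..d})" by (intro Gcd_greatest) auto
  then have "D * c dvd c" by (simp add: c_def content_def)
  then have "D dvd 1" using c0 by (metis dvd_times_right_cancel_iff mult_1)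
  moreover have "D \<ge> 0" unfolding D_def content_def by simp
  ultimately have "D = 1" by simp
  then show ?thesis unfolding D_def by (simp add: prim_part_def)
qed


lemma lv0_iff: assumes inj: "inj_on rk {1..d}"
  shows "lv rk d f = 0 \<longleftrightarrow> (\<forall>i\<in>{1..d}. f i = 0)"
  using lv_char[OF inj, of f] lv_zero[of d f rk] by force

lemma in_vars_spoly: "in_vars d g \<Longrightarrow> in_vars d h \<Longrightarrow> in_vars d (spoly rk d g h)"
  unfolding in_vars_def spoly_def by simp

lemma spoly_const:
  assumes inj: "inj_on rk {1..d}" and "in_vars d g" "in_vars d h" "lv rk d g = 0" "lv rk d h = 0"
  shows "spoly rk d g h = (\<lambda>_. 0)"
proof
  fix i
  have g: "\<forall>i\<in>{1..d}. g i = 0" and h: "\<forall>i\<in>{1..d}. h i = 0" using assms lv0_iff[OF inj] by auto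
  show "spoly rk d g h i = 0"
  proof (cases "i = 0")
    case True then show ?thesis using assms by (simp add: spoly_def lc_def)
  next
    case False
    then have "g i = 0 \<and> h i = 0" using g h assms(2,3) unfolding in_vars_def
      by (metis atLeastAtMost_iff less_one linorder_not_le not_gr_zero)
    then show ?thesis by (simp add: spoly_def)
  qed
qed

lemma rk_range: assumes "bij_betw rk {1..d} {1..d}" "i \<in> {1..d}" shows "rk i \<in> {1..d}"
  using assms bij_betwE by blast

lemma lv_rank_le_d: assumes bij: "bij_betw rk {1..d} {1..d}"
  shows "lv_rank rk d f \<le> d"
proof -
  have inj: "inj_on rk {1..d}" using bij bij_betw_def by blast
  show ?thesis
  proof (cases "\<forall>i\<in>{1..d}. f i = 0")
    case True then show ?thesis by (simp add: lv_rank_def lv_zero)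
  next
    case False
    then have "lv rk d f \<in> {1..d}" using lv_char[OF inj] by blast
    then show ?thesis using rk_range[OF bij] by (force simp: lv_rank_def)
  qed
qed

lemma lv_rank_spoly:
  assumes bij: "bij_betw rk {1..d} {1..d}" and "in_vars d g" "in_vars d h"
    and eq: "lv rk d g = lv rk d h" and nz: "lv rk d h \<noteq> 0"
  shows "lv_rank rk d (spoly rk d g h) < lv_rank rk d h"
proof -
  have inj: "inj_on rk {1..d}" using bij bij_betw_def by blast
  define v where "v = lv rk d h"
  have hn: "\<exists>i\<in>{1..d}. h i \<noteq> 0" using nz lv0_iff[OF inj, of h] by auto
  have gn: "\<exists>i\<in>{1..d}. g i \<noteq> 0" using nz eq lv0_iff[OF inj, of g] by auto
  note ch = lv_char[OF inj hn] and cg = lv_char[OF inj gn]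
  have v1: "v \<in> {1..d}" using ch v_def by simp
  have rv: "rk v \<in> {1..d}" using rk_range[OF bij v1] .
  have lrh: "lv_rank rk d h = rk v" using nz v_def by (simp add: lv_rank_def)
  have "\<forall>i\<in>{1..d}. rk i > rk v - 1 \<longrightarrow> spoly rk d g h i = 0"
  proof (intro ballI impI)
    fix i assume i: "i \<in> {1..d}" "rk i > rk v - 1"
    show "spoly rk d g h i = 0"
    proof (cases "rk i = rk v")
      case True
      then have "i = v" using inj i v1 inj_onD by metis
      then show ?thesis by (simp add: spoly_def lc_def v_def eq)
    next
      case False
      then have "rk i > rk v" using i by auto
      then have "g i = 0" "h i = 0" using ch cg i v_def eq by (auto simp: not_le[symmetric])
      then show ?thesis by (simp add: spoly_def)
    qed
  qed
  then have "lv_rank rk d (spoly rk d g h) \<le> rk v - 1" using lv_rank_le_iff[OF inj] by blast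
  then show ?thesis using lrh rv by auto
qed



lemma lv_rank0_iff: assumes bij: "bij_betw rk {1..d} {1..d}"
  shows "lv_rank rk d f = 0 \<longleftrightarrow> lv rk d f = 0"
proof -
  have inj: "inj_on rk {1..d}" using bij bij_betw_def by blast
  show ?thesis
  proof (cases "\<forall>i\<in>{1..d}. f i = 0")
    case True then show ?thesis by (simp add: lv_rank_def lv_zero)
  next
    case False
    then have "lv rk d f \<in> {1..d}" using lv_char[OF inj] by blast
    then show ?thesis using rk_range[OF bij] by (force simp: lv_rank_def)
  qed
qed

lemma in_divmod_rhs: "(f, g) \<in> set \<Phi> \<Longrightarrow> g \<in> divmod \<Phi> f"
  using divmod.divc[of f g \<Phi> 1 f] divmod.base[of f \<Phi>] by simp

lemma elD:
  assumes el: "elimination_property rk d \<Phi>" and f: "f \<in> prim_part d ` lhs_polys \<Phi>" and k: "k \<le> d"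
  shows "lin_indep {g. lv_rank rk d g \<le> k \<and> (f, g) \<in> set \<Phi>}
     \<and> int_span {g. lv_rank rk d g \<le> k \<and> (f, g) \<in> set \<Phi>} = divmod \<Phi> f \<inter> poly_upto rk d k"
proof -
  have "\<forall>f \<in> prim_part d ` lhs_polys \<Phi>. \<forall>k \<le> d.
       (let S = {g. lv_rank rk d g \<le> k \<and> (f, g) \<in> set \<Phi>} in
          lin_indep S \<and> int_span S = divmod \<Phi> f \<inter> poly_upto rk d k)"
    using el unfolding elimination_property_def .
  then have "let S = {g. lv_rank rk d g \<le> k \<and> (f, g) \<in> set \<Phi>} in
          lin_indep S \<and> int_span S = divmod \<Phi> f \<inter> poly_upto rk d k"
    using f k by blast
  then show ?thesis unfolding Let_def .
qed

lemma const_zero: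
  assumes inj: "inj_on rk {1..d}" and iv: "in_vars d g" and l: "lv rk d g = 0" and z: "g 0 = 0"
  shows "g = (\<lambda>_. 0)"
proof
  fix i
  have a: "\<forall>i\<in>{1..d}. g i = 0" using l lv0_iff[OF inj] by blast
  show "g i = 0"
  proof (cases "i = 0")
    case True then show ?thesis using z by simp
  next
    case False
    show ?thesis
    proof (cases "i \<le> d")
      case True then show ?thesis using a False by simp
    next
      case False then show ?thesis using iv unfolding in_vars_def by simp
    qed
  qed
qed

lemma uniq:
  assumes bij: "bij_betw rk {1..d} {1..d}" and wf: "wf_system d \<Phi>"
    and el: "elimination_property rk d \<Phi>" and f: "f \<in> prim_part d ` lhs_polys \<Phi>"
    and g1: "(f, g1) \<in> set \<Phi>" and g2: "(f, g2) \<in> set \<Phi>"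
    and eq: "lv rk d g1 = lv rk d g2"
  shows "g1 = g2"
proof (rule ccontr)
  assume ne: "g1 \<noteq> g2"
  have inj: "inj_on rk {1..d}" using bij bij_betw_def by blast
  have iv1: "in_vars d g1" and iv2: "in_vars d g2" using wf g1 g2 unfolding wf_system_def by auto
  define k where "k = lv_rank rk d g1"
  have k2: "lv_rank rk d g2 = k" using eq k_def by (simp add: lv_rank_def)
  have kd: "k \<le> d" using lv_rank_le_d[OF bij] k_def by simp
  define S where "S = {g. lv_rank rk d g \<le> k \<and> (f, g) \<in> set \<Phi>}"
  define S' where "S' = {g. lv_rank rk d g < k \<and> (f, g) \<in> set \<Phi>}"
  have li: "lin_indep S" using elD[OF el f kd] unfolding S_def by (rule conjunct1)
  have finS: "finite S" 
  proof (rule finite_subset[of _ "snd ` set \<Phi>"])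
    show "S \<subseteq> snd ` set \<Phi>"
    proof
      fix g assume "g \<in> S"
      then have "(f, g) \<in> set \<Phi>" unfolding S_def by simp
      then show "g \<in> snd ` set \<Phi>" by (rule rev_image_eqI) simp
    qed
  qed simp
  have inS: "g1 \<in> S" "g2 \<in> S" using g1 g2 k2 k_def by (auto simp: S_def)
  have nS': "g1 \<notin> S'" "g2 \<notin> S'" using k2 k_def by (auto simp: S'_def)
  have sub: "S' \<subseteq> S" by (auto simp: S_def S'_def)
  define p where "p = spoly rk d g1 g2"
  obtain c where rep: "\<And>i. p i = (\<Sum>s\<in>S'. c s * s i)"
  proof (cases "k = 0")
    case True
    then have "S' = {}" by (simp add: S'_def)
    moreover have "lv rk d g1 = 0" "lv rk d g2 = 0" using True k_def k2 eq lv_rank0_iff[OF bij] by auto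
    ultimately show ?thesis using that spoly_const[OF inj iv1 iv2] p_def by simp
  next
    case False
    have sp: "int_span S' = divmod \<Phi> f \<inter> poly_upto rk d (k - 1)"
    proof -
      have "S' = {g. lv_rank rk d g \<le> k - 1 \<and> (f, g) \<in> set \<Phi>}" using False by (auto simp: S'_def)
      moreover have "k - 1 \<le> d" using kd by simp
      ultimately show ?thesis using elD[OF el f] by simp
    qed
    have a: "(\<lambda>i. lc rk d g2 * g1 i) \<in> divmod \<Phi> f" using divmod.smult[OF in_divmod_rhs[OF g1]] .
    have b: "(\<lambda>i. (- lc rk d g1) * g2 i) \<in> divmod \<Phi> f" using divmod.smult[OF in_divmod_rhs[OF g2]] .
    have "p \<in> divmod \<Phi> f" using divmod.add[OF a b] by (simp add: p_def spoly_def)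
    moreover have "p \<in> poly_upto rk d (k - 1)"
    proof -
      have nz: "lv rk d g2 \<noteq> 0" using False k2 lv_rank0_iff[OF bij, of g2] by simp
      have "lv_rank rk d p < k" using lv_rank_spoly[OF bij iv1 iv2 eq nz] k2 p_def by simp
      then have "lv_rank rk d p \<le> k - 1" by simp
      then show ?thesis using lv_rank_le_iff[OF inj] in_vars_spoly[OF iv1 iv2] p_def
        unfolding poly_upto_def by blast
    qed
    ultimately have "p \<in> int_span S'" using sp by blast
    then show ?thesis using that unfolding int_span_def by auto
  qed
  define c' where "c' s = (if s = g1 then lc rk d g2 else if s = g2 then - lc rk d g1
     else if s \<in> S' then - c s else 0)" for s
  have "(\<Sum>s\<in>S. c' s * s i) = 0" for i
  proof -
    have "(\<Sum>s\<in>S. c' s * s i) = (\<Sum>s\<in>S. (if s = g1 then lc rk d g2 * g1 i else 0)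
       + (if s = g2 then - lc rk d g1 * g2 i else 0) + (if s \<in> S' then - (c s * s i) else 0))"
      by (rule sum.cong) (use ne nS' in \<open>auto simp: c'_def\<close>)
    also have "\<dots> = (\<Sum>s\<in>S. (if s = g1 then lc rk d g2 * g1 i else 0))
       + (\<Sum>s\<in>S. (if s = g2 then - lc rk d g1 * g2 i else 0))
       + (\<Sum>s\<in>S. (if s \<in> S' then - (c s * s i) else 0))"
      by (simp only: sum.distrib)
    also have "(\<Sum>s\<in>S. (if s = g1 then lc rk d g2 * g1 i else 0)) = lc rk d g2 * g1 i"
      using finS inS by (simp add: sum.delta)
    also have "(\<Sum>s\<in>S. (if s = g2 then - lc rk d g1 * g2 i else 0)) = - lc rk d g1 * g2 i"
      using finS inS by (simp add: sum.delta)
    also have "(\<Sum>s\<in>S. (if s \<in> S' then - (c s * s i) else 0)) = - (\<Sum>s\<in>S'. c s * s i)"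
    proof -
      have "(\<Sum>s\<in>S. (if s \<in> S' then - (c s * s i) else 0)) = (\<Sum>s\<in>S \<inter> S'. - (c s * s i))"
        by (rule sum.inter_restrict[OF finS, symmetric])
      also have "S \<inter> S' = S'" using sub by blast
      finally show ?thesis by (simp add: sum_negf)
    qed
    also have "lc rk d g2 * g1 i + - lc rk d g1 * g2 i + - (\<Sum>s\<in>S'. c s * s i) = 0"
      using rep[of i] by (simp add: p_def spoly_def)
    finally show ?thesis .
  qed
  then have "c' g1 = 0" "c' g2 = 0" using li inS unfolding lin_indep_def by blast+
  then have z: "lc rk d g2 = 0" "lc rk d g1 = 0" using ne by (auto simp: c'_def)
  show False
  proof (cases "k = 0")
    case False
    have nz: "lv rk d g2 \<noteq> 0" using False k2 lv_rank0_iff[OF bij, of g2] by simp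
    then have "\<exists>i\<in>{1..d}. g2 i \<noteq> 0" using lv0_iff[OF inj, of g2] by auto
    then show False using lv_char[OF inj] z by (auto simp: lc_def)
  next
    case True
    have l: "lv rk d g1 = 0" "lv rk d g2 = 0" using True k_def k2 eq lv_rank0_iff[OF bij] by auto
    have "g1 = (\<lambda>_. 0)" "g2 = (\<lambda>_. 0)"
      using const_zero[OF inj iv1 l(1)] const_zero[OF inj iv2 l(2)] l z by (simp_all add: lc_def)
    then show False using ne by simp
  qed
qed



definition stp :: "(nat \<Rightarrow> nat) \<Rightarrow> nat \<Rightarrow> system \<Rightarrow> lin \<Rightarrow> lin \<Rightarrow> lin" where
  "stp rk d \<Phi> f h = (if \<exists>g. (f, g) \<in> set \<Phi> \<and> lv rk d g = lv rk d h
     then spoly rk d (SOME g. (f, g) \<in> set \<Phi> \<and> lv rk d g = lv rk d h) h else h)"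

definition pot :: "(nat \<Rightarrow> nat) \<Rightarrow> nat \<Rightarrow> system \<Rightarrow> lin \<Rightarrow> lin \<Rightarrow> nat" where
  "pot rk d \<Phi> f h = (if stp rk d \<Phi> f h = h then 0 else lv_rank rk d h + 1)"

lemma terms_in_vars: "wf_system d \<Phi> \<Longrightarrow> t \<in> terms \<Phi> \<Longrightarrow> in_vars d t"
  unfolding wf_system_def terms_def by auto

lemma rhs_in_vars: "wf_system d \<Phi> \<Longrightarrow> (f, g) \<in> set \<Phi> \<Longrightarrow> in_vars d g"
  unfolding wf_system_def by auto

lemma stp_cases:
  "stp rk d \<Phi> f h = h \<or> (\<exists>g. (f, g) \<in> set \<Phi> \<and> lv rk d g = lv rk d h \<and> stp rk d \<Phi> f h = spoly rk d g h)"
proof (cases "\<exists>g. (f, g) \<in> set \<Phi> \<and> lv rk d g = lv rk d h")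
  case True
  define g0 where "g0 = (SOME g. (f, g) \<in> set \<Phi> \<and> lv rk d g = lv rk d h)"
  have g0: "(f, g0) \<in> set \<Phi> \<and> lv rk d g0 = lv rk d h" unfolding g0_def by (rule someI_ex[OF True])
  have "stp rk d \<Phi> f h = spoly rk d g0 h" unfolding stp_def g0_def using True by (simp only: if_True)
  then show ?thesis using g0 by blast
next
  case False
  then have "stp rk d \<Phi> f h = h" unfolding stp_def by (simp only: if_False)
  then show ?thesis by blast
qed

lemma stp_spoly:
  assumes U: "\<And>g1 g2. (f, g1) \<in> set \<Phi> \<Longrightarrow> (f, g2) \<in> set \<Phi> \<Longrightarrow> lv rk d g1 = lv rk d g2 \<Longrightarrow> g1 = g2"
    and g: "(f, g) \<in> set \<Phi>" "lv rk d g = lv rk d h"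
  shows "stp rk d \<Phi> f h = spoly rk d g h"
proof -
  have "(SOME g. (f, g) \<in> set \<Phi> \<and> lv rk d g = lv rk d h) = g"
    using g U by (intro some_equality) auto
  then show ?thesis using g unfolding stp_def by auto
qed

lemma in_vars_stp: "wf_system d \<Phi> \<Longrightarrow> in_vars d h \<Longrightarrow> in_vars d (stp rk d \<Phi> f h)"
proof -
  assume wf: "wf_system d \<Phi>" and iv: "in_vars d h"
  from stp_cases[of rk d \<Phi> f h] show ?thesis
  proof
    assume "stp rk d \<Phi> f h = h" then show ?thesis using iv by simp
  next
    assume "\<exists>g. (f, g) \<in> set \<Phi> \<and> lv rk d g = lv rk d h \<and> stp rk d \<Phi> f h = spoly rk d g h"
    then obtain g where "(f, g) \<in> set \<Phi>" "stp rk d \<Phi> f h = spoly rk d g h" by blast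
    then show ?thesis using in_vars_spoly[OF rhs_in_vars[OF wf] iv] by simp
  qed
qed

lemma pot_dec:
  assumes bij: "bij_betw rk {1..d} {1..d}" and wf: "wf_system d \<Phi>" and iv: "in_vars d h"
    and ne: "stp rk d \<Phi> f h \<noteq> h"
  shows "pot rk d \<Phi> f (stp rk d \<Phi> f h) < pot rk d \<Phi> f h"
proof -
  have inj: "inj_on rk {1..d}" using bij bij_betw_def by blast
  obtain g where g: "(f, g) \<in> set \<Phi>" "lv rk d g = lv rk d h" "stp rk d \<Phi> f h = spoly rk d g h"
    using stp_cases[of rk d \<Phi> f h] ne by blast
  have ivg: "in_vars d g" using rhs_in_vars[OF wf g(1)] .
  have ph: "pot rk d \<Phi> f h = lv_rank rk d h + 1" using ne by (simp add: pot_def)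
  show ?thesis
  proof (cases "lv rk d h = 0")
    case False
    have "lv_rank rk d (stp rk d \<Phi> f h) < lv_rank rk d h"
      using lv_rank_spoly[OF bij ivg iv g(2) False] g(3) by simp
    then show ?thesis using ph by (simp add: pot_def)
  next
    case True
    have z: "stp rk d \<Phi> f h = (\<lambda>_. 0)" using spoly_const[OF inj ivg iv] g True by simp
    have lz: "lv rk d (\<lambda>_::nat. 0::int) = 0" by (simp add: lv_zero)
    have "stp rk d \<Phi> f (\<lambda>_. 0) = (\<lambda>_. 0)"
    proof -
      have "spoly rk d g' (\<lambda>_. 0) = (\<lambda>_. 0)" for g' by (simp add: spoly_def lc_def fun_eq_iff)
      then show ?thesis using stp_cases[of rk d \<Phi> f "\<lambda>_. 0"] by metis
    qed
    then have "pot rk d \<Phi> f (stp rk d \<Phi> f h) = 0" using z by (simp add: pot_def)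
    then show ?thesis using ph by simp
  qed
qed

lemma pot_le:
  assumes bij: "bij_betw rk {1..d} {1..d}" shows "pot rk d \<Phi> f h \<le> d + 1"
  using lv_rank_le_d[OF bij, of h] by (simp add: pot_def)

lemma stp_fix:
  assumes bij: "bij_betw rk {1..d} {1..d}" and wf: "wf_system d \<Phi>"
  shows "in_vars d h \<Longrightarrow> pot rk d \<Phi> f h \<le> r \<Longrightarrow>
    stp rk d \<Phi> f ((stp rk d \<Phi> f ^^ r) h) = (stp rk d \<Phi> f ^^ r) h"
proof (induction r arbitrary: h)
  case 0
  then show ?case by (simp add: pot_def split: if_splits)
next
  case (Suc r)
  show ?case
  proof (cases "stp rk d \<Phi> f h = h")
    case True
    then have "(stp rk d \<Phi> f ^^ n) h = h" for n by (induction n) auto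
    then show ?thesis using True by simp
  next
    case False
    have "pot rk d \<Phi> f (stp rk d \<Phi> f h) \<le> r"
      using pot_dec[OF bij wf Suc.prems(1) False] Suc.prems(2) by simp
    from Suc.IH[OF in_vars_stp[OF wf Suc.prems(1)] this]
    show ?thesis by (simp add: funpow_Suc_right del: funpow.simps)
  qed
qed

lemma stp_min:
  assumes bij: "bij_betw rk {1..d} {1..d}" and wf: "wf_system d \<Phi>" and iv: "in_vars d h"
  shows "(stp rk d \<Phi> f ^^ n) h = (stp rk d \<Phi> f ^^ (min n (d+1))) h"
proof (cases "n \<le> d + 1")
  case True then show ?thesis by simp
next
  case False
  have fx: "stp rk d \<Phi> f ((stp rk d \<Phi> f ^^ (d+1)) h) = (stp rk d \<Phi> f ^^ (d+1)) h"
    using stp_fix[OF bij wf iv pot_le[OF bij]] .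
  have "(stp rk d \<Phi> f ^^ (d + 1 + j)) h = (stp rk d \<Phi> f ^^ (d+1)) h" for j
    by (induction j) (use fx in auto)
  from this[of "n - (d+1)"] False show ?thesis by simp
qed

definition chain :: "(nat \<Rightarrow> nat) \<Rightarrow> nat \<Rightarrow> system \<Rightarrow> lin \<Rightarrow> lin set" where
  "chain rk d \<Phi> f = (\<lambda>(t, n). (stp rk d \<Phi> f ^^ n) t) ` (terms \<Phi> \<times> {..d+1})"

lemma Delta_f_sub:
  assumes bij: "bij_betw rk {1..d} {1..d}" and wf: "wf_system d \<Phi>"
    and U: "\<And>g1 g2. (f, g1) \<in> set \<Phi> \<Longrightarrow> (f, g2) \<in> set \<Phi> \<Longrightarrow> lv rk d g1 = lv rk d g2 \<Longrightarrow> g1 = g2"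
  shows "Delta_f rk d \<Phi> f \<subseteq> chain rk d \<Phi> f"
proof
  fix x assume "x \<in> Delta_f rk d \<Phi> f"
  then show "x \<in> chain rk d \<Phi> f"
  proof (induction rule: Delta_f.induct)
    case (tm t)
    have "(t, 0) \<in> terms \<Phi> \<times> {..d+1}" using tm by simp
    then show ?case unfolding chain_def by (rule rev_image_eqI) simp
  next
    case (spol g h)
    from spol.IH obtain t n where tn: "t \<in> terms \<Phi>" "n \<le> d+1" "h = (stp rk d \<Phi> f ^^ n) t"
      unfolding chain_def by auto
    have "spoly rk d g h = stp rk d \<Phi> f h" using stp_spoly[OF U spol.hyps(1) spol.hyps(3)] by (rule sym)
    also have "\<dots> = (stp rk d \<Phi> f ^^ Suc n) t" using tn by simp
    also have "\<dots> = (stp rk d \<Phi> f ^^ (min (Suc n) (d+1))) t"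
      using stp_min[OF bij wf terms_in_vars[OF wf tn(1)]] .
    finally have X: "spoly rk d g h = (stp rk d \<Phi> f ^^ (min (Suc n) (d+1))) t" .
    have "(t, min (Suc n) (d+1)) \<in> terms \<Phi> \<times> {..d+1}" using tn by simp
    then have "(\<lambda>(t, n). (stp rk d \<Phi> f ^^ n) t) (t, min (Suc n) (d+1)) \<in> chain rk d \<Phi> f"
      unfolding chain_def by (rule imageI)
    then show ?case using X by simp
  qed
qed

lemma Delta_f_nolhs:
  assumes "f \<notin> fst ` set \<Phi>"
  shows "Delta_f rk d \<Phi> f \<subseteq> terms \<Phi>"
proof
  fix x assume "x \<in> Delta_f rk d \<Phi> f"
  then show "x \<in> terms \<Phi>"
  proof (induction rule: Delta_f.induct)
    case (tm t) then show ?case .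
  next
    case (spol g h)
    have "f \<in> fst ` set \<Phi>" using spol.hyps(1) by (rule rev_image_eqI) simp
    then show ?case using assms by contradiction
  qed
qed



lemma bitlen_bound:
  fixes N a :: int and d :: nat
  assumes N0: "N \<ge> 0" and ab: "\<bar>a\<bar> \<le> (2*N)^(d+1) * N"
  shows "bitlen a \<le> int (d + 2) * (bitlen N + 1)"
proof -
  define x where "x = real_of_int N + 1"
  have x0: "x > 0" using N0 x_def by simp
  define L where "L = nat \<lceil>log 2 x\<rceil>"
  have lg0: "log 2 x \<ge> 0" using N0 x_def by simp
  have Lint: "int L = \<lceil>log 2 x\<rceil>" unfolding L_def using lg0 by simp
  have "log 2 x \<le> of_int \<lceil>log 2 x\<rceil>" by (rule le_of_int_ceiling)
  also have "of_int \<lceil>log 2 x\<rceil> = real L" using Lint by (metis of_int_of_nat_eq)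
  finally have lL: "log 2 x \<le> real L" .
  have "x = 2 powr (log 2 x)" using x0 by simp
  also have "\<dots> \<le> 2 powr (real L)" using lL by (intro powr_mono) auto
  also have "\<dots> = 2 ^ L" by (simp add: powr_realpow)
  finally have "real_of_int (N + 1) \<le> real_of_int (2 ^ L)" unfolding x_def by simp
  then have "N + 1 \<le> 2 ^ L" by (simp only: of_int_le_iff)
  then have NL: "N < 2 ^ L" by simp
  define E where "E = d + 1 + L * (d + 2)"
  have "(2*N)^(d+1) * N = 2^(d+1) * N^(d+2)" by (simp add: power_mult_distrib algebra_simps)
  then have "\<bar>a\<bar> \<le> 2^(d+1) * N^(d+2)" by (rule ord_le_eq_trans[OF ab])
  also have "\<dots> < 2^(d+1) * (2^L)^(d+2)"
    using power_strict_mono[OF NL N0, of "d+2"] by simp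
  also have "\<dots> = 2 ^ E" unfolding E_def by (simp add: power_add power_mult mult.commute)
  finally have aE: "\<bar>a\<bar> + 1 \<le> 2 ^ E" by simp
  define y where "y = real_of_int \<bar>a\<bar> + 1"
  have y0: "y > 0" unfolding y_def by simp
  have "y = real_of_int (\<bar>a\<bar> + 1)" unfolding y_def by simp
  also have "\<dots> \<le> real_of_int (2 ^ E)" using aE by (simp only: of_int_le_iff)
  also have "\<dots> = 2 powr (real E)" by (simp add: powr_realpow)
  finally have "y \<le> 2 powr (real E)" .
  then have "log 2 y \<le> log 2 (2 powr (real E))" using y0 by (intro log_mono) auto
  then have "log 2 y \<le> real E" by simp
  then have "\<lceil>log 2 y\<rceil> \<le> int E" by (simp add: ceiling_le_iff)
  then have "bitlen a \<le> 1 + int E" unfolding bitlen_def y_def by simp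
  also have "\<dots> = int (d+2) * (int L + 1)" unfolding E_def by (simp add: algebra_simps)
  also have "\<dots> \<le> int (d+2) * (bitlen N + 1)" unfolding bitlen_def using Lint x_def N0 by simp
  finally show ?thesis .
qed


lemma finite_terms: "finite (terms \<Phi>)" unfolding terms_def by simp

lemma card_terms: "card (terms \<Phi>) \<le> 2 * length \<Phi>"
proof -
  have "card (terms \<Phi>) \<le> card (fst ` set \<Phi>) + card (snd ` set \<Phi>)"
    unfolding terms_def by (rule card_Un_le)
  also have "\<dots> \<le> card (set \<Phi>) + card (set \<Phi>)" by (intro add_mono card_image_le) auto
  also have "\<dots> \<le> 2 * length \<Phi>" using card_length[of \<Phi>] by simp
  finally show ?thesis .
qed

lemma norm_nonneg: "finite P \<Longrightarrow> norm_inf d P \<ge> 0"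
proof -
  assume fP: "finite P"
  have "finite {\<bar>p i\<bar> | p i. p \<in> P \<and> i \<le> d}"
    by (rule finite_subset[of _ "(\<lambda>(p,i). \<bar>p i\<bar>) ` (P \<times> {..d})"]) (use fP in auto)
  then show ?thesis unfolding norm_inf_def by (intro Max_ge_iff[THEN iffD2]) auto
qed

lemma term_bound:
  assumes fP: "finite P" and t: "t \<in> P" and iv: "in_vars d t"
  shows "\<bar>t i\<bar> \<le> norm_inf d P"
proof (cases "i \<le> d")
  case True
  have fin: "finite {\<bar>p i\<bar> | p i. p \<in> P \<and> i \<le> d}"
    by (rule finite_subset[of _ "(\<lambda>(p,i). \<bar>p i\<bar>) ` (P \<times> {..d})"]) (use fP in auto)
  have "\<bar>t i\<bar> \<in> {\<bar>p i\<bar> | p i. p \<in> P \<and> i \<le> d} \<union> {0}" using t True by blast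
  then show ?thesis unfolding norm_inf_def using fin by (intro Max_ge) auto
next
  case False
  then have "t i = 0" using iv unfolding in_vars_def by auto
  then show ?thesis using norm_nonneg[OF fP] by simp
qed

lemma chain_bound:
  fixes N :: int
  assumes wf: "wf_system d \<Phi>" and B: "\<And>t i. t \<in> terms \<Phi> \<Longrightarrow> \<bar>t i\<bar> \<le> N" and N0: "N \<ge> 0"
    and t: "t \<in> terms \<Phi>"
  shows "\<bar>(stp rk d \<Phi> f ^^ n) t i\<bar> \<le> (2*N)^n * N"
proof (induction n arbitrary: i)
  case 0
  then show ?case using B t by simp
next
  case (Suc n)
  define h where "h = (stp rk d \<Phi> f ^^ n) t"
  have IH: "\<bar>h j\<bar> \<le> (2*N)^n * N" for j using Suc.IH h_def by simp
  have mono: "(2*N)^n * N \<le> (2*N)^Suc n * N"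
  proof (cases "N = 0")
    case False
    then have "(2*N)^n \<le> (2*N)^Suc n" using N0 by (intro power_increasing) auto
    then show ?thesis using N0 by (simp add: mult_right_mono)
  qed simp
  have Bn: "(2*N)^n * N \<ge> 0" using N0 by simp
  show ?case
  proof (cases "stp rk d \<Phi> f h = h")
    case True
    then have e: "(stp rk d \<Phi> f ^^ Suc n) t = h" using h_def by simp
    show ?thesis unfolding e by (rule order_trans[OF IH mono])
  next
    case False
    obtain g where g: "(f, g) \<in> set \<Phi>" "stp rk d \<Phi> f h = spoly rk d g h"
      using stp_cases[of rk d \<Phi> f h] False by blast
    have gt: "g \<in> terms \<Phi>" using g unfolding terms_def by force
    have "\<bar>spoly rk d g h i\<bar> \<le> \<bar>lc rk d h\<bar> * \<bar>g i\<bar> + \<bar>lc rk d g\<bar> * \<bar>h i\<bar>"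
      unfolding spoly_def by (simp add: abs_mult[symmetric] abs_triangle_ineq4)
    also have "\<dots> \<le> ((2*N)^n * N) * N + N * ((2*N)^n * N)"
      using IH B[OF gt] Bn N0 unfolding lc_def by (intro add_mono mult_mono) auto
    also have "\<dots> = (2*N)^Suc n * N" by (simp add: algebra_simps)
    finally show ?thesis using g h_def by simp
  qed
qed



theorem mainTheorem10:
  fixes d :: nat and rk :: "nat \<Rightarrow> nat" and \<Phi> :: system
  assumes "bij_betw rk {1..d} {1..d}"
    and "wf_system d \<Phi>"
    and "elimination_property rk d \<Phi>"
  shows "finite (Delta rk d \<Phi>)
    \<and> card (Delta rk d \<Phi>) \<le> 2 * (length \<Phi>)^2 * (d + 2)
    \<and> (\<forall>h \<in> Delta rk d \<Phi>. \<forall>i \<le> d.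
          bitlen (h i) \<le> int (d + 2) * (bitlen (norm_inf d (terms \<Phi>)) + 1))"
proof -
  note bij = assms(1) and wf = assms(2) and el = assms(3)
  define m where "m = length \<Phi>"
  have m1: "m \<ge> 1" using wf unfolding wf_system_def m_def by simp
  define I where "I = prim_part d ` {t \<in> terms \<Phi>. t \<noteq> (\<lambda>_. 0)}"
  define L where "L = I \<inter> fst ` set \<Phi>"
  have DI: "Delta rk d \<Phi> = (\<Union>f\<in>I. Delta_f rk d \<Phi> f)" unfolding Delta_def I_def ..
  have sub: "Delta_f rk d \<Phi> f \<subseteq> chain rk d \<Phi> f" if fL: "f \<in> L" for f
  proof (rule Delta_f_sub[OF bij wf])
    obtain t where t: "t \<in> terms \<Phi>" "t \<noteq> (\<lambda>_. 0)" "f = prim_part d t"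
      using fL unfolding L_def I_def by auto
    have "prim_part d f = f" using prim_part_idem[OF terms_in_vars[OF wf t(1)] t(2)] t(3) by simp
    moreover have "f \<in> lhs_polys \<Phi>" using fL unfolding L_def lhs_polys_def by auto
    ultimately have fin: "f \<in> prim_part d ` lhs_polys \<Phi>" by (metis image_eqI)
    show "g1 = g2" if "(f, g1) \<in> set \<Phi>" "(f, g2) \<in> set \<Phi>" "lv rk d g1 = lv rk d g2" for g1 g2
      using uniq[OF bij wf el fin that] .
  qed
  have sub2: "Delta_f rk d \<Phi> f \<subseteq> terms \<Phi>" if "f \<in> I" "f \<notin> L" for f
    using Delta_f_nolhs that unfolding L_def by blast
  have DS: "Delta rk d \<Phi> \<subseteq> terms \<Phi> \<union> (\<Union>f\<in>L. chain rk d \<Phi> f)"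
    unfolding DI using sub sub2 by blast
  have term_chain: "terms \<Phi> \<subseteq> chain rk d \<Phi> f" for f
    unfolding chain_def by (force intro: image_eqI[where x="(_, 0)"])
  have finL: "finite L" unfolding L_def by simp
  have fin_chain: "finite (chain rk d \<Phi> f)" for f unfolding chain_def using finite_terms by simp
  have card_chain: "card (chain rk d \<Phi> f) \<le> 2 * m * (d + 2)" for f
  proof -
    have "card (chain rk d \<Phi> f) \<le> card (terms \<Phi> \<times> {..d+1})" unfolding chain_def
      by (rule card_image_le) (simp add: finite_terms)
    also have "\<dots> = card (terms \<Phi>) * (d + 2)" by (simp add: card_cartesian_product)
    also have "\<dots> \<le> 2 * m * (d + 2)" using card_terms[of \<Phi>] m_def by (intro mult_right_mono) auto
    finally show ?thesis .
  qed
  have cardL: "card L \<le> m"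
  proof -
    have "card L \<le> card (fst ` set \<Phi>)" unfolding L_def by (intro card_mono) auto
    also have "\<dots> \<le> card (set \<Phi>)" by (rule card_image_le) simp
    also have "\<dots> \<le> m" using card_length m_def by simp
    finally show ?thesis .
  qed
  have finD: "finite (Delta rk d \<Phi>)"
    using finite_subset[OF DS] finite_terms finL fin_chain by auto
  have cardD: "card (Delta rk d \<Phi>) \<le> 2 * m^2 * (d + 2)"
  proof (cases "L = {}")
    case True
    then have "card (Delta rk d \<Phi>) \<le> card (terms \<Phi>)" using DS finite_terms by (simp add: card_mono)
    also have "\<dots> \<le> 2 * m" using card_terms m_def by simp
    also have "\<dots> \<le> 2 * m^2 * (d + 2)"
    proof -
      have "m \<le> m * m" using m1 by simp
      then have "2 * m \<le> 2 * m^2" by (simp add: power2_eq_square)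
      also have "\<dots> \<le> 2 * m^2 * (d + 2)" by simp
      finally show ?thesis .
    qed
    finally show ?thesis .
  next
    case False
    then obtain f0 where "f0 \<in> L" by blast
    then have "Delta rk d \<Phi> \<subseteq> (\<Union>f\<in>L. chain rk d \<Phi> f)" using DS term_chain by blast
    then have "card (Delta rk d \<Phi>) \<le> card (\<Union>f\<in>L. chain rk d \<Phi> f)"
      using finL fin_chain by (intro card_mono) auto
    also have "\<dots> \<le> (\<Sum>f\<in>L. card (chain rk d \<Phi> f))" by (rule card_UN_le[OF finL])
    also have "\<dots> \<le> card L * (2 * m * (d + 2))" using sum_bounded_above[of L, OF card_chain] by simp
    also have "\<dots> \<le> m * (2 * m * (d + 2))" using cardL by (intro mult_right_mono) auto
    also have "\<dots> = 2 * m^2 * (d + 2)" by (simp add: power2_eq_square algebra_simps)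
    finally show ?thesis .
  qed
  define N where "N = norm_inf d (terms \<Phi>)"
  have N0: "N \<ge> 0" using norm_nonneg[OF finite_terms] N_def by simp
  have B: "\<bar>t i\<bar> \<le> N" if "t \<in> terms \<Phi>" for t i
    using term_bound[OF finite_terms that terms_in_vars[OF wf that]] N_def by simp
  have bnd: "\<bar>x i\<bar> \<le> (2*N)^(d+1) * N" if xc: "x \<in> chain rk d \<Phi> f" for x f i
  proof -
    obtain t n where tn: "t \<in> terms \<Phi>" "n \<le> d+1" "x = (stp rk d \<Phi> f ^^ n) t"
      using xc unfolding chain_def by auto
    have "\<bar>x i\<bar> \<le> (2*N)^n * N" unfolding tn(3)
      by (rule chain_bound[OF wf]) (use B N0 tn(1) in auto)
    also have "\<dots> \<le> (2*N)^(d+1) * N"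
    proof (cases "N = 0")
      case False
      then have "(2*N)^n \<le> (2*N)^(d+1)" using N0 tn(2) by (intro power_increasing) auto
      then show ?thesis using N0 by (simp add: mult_right_mono)
    qed simp
    finally show ?thesis .
  qed
  obtain f0 :: lin where True by simp
  have "\<forall>h \<in> Delta rk d \<Phi>. \<forall>i \<le> d. bitlen (h i) \<le> int (d + 2) * (bitlen N + 1)"
  proof (intro ballI allI impI)
    fix h i assume h: "h \<in> Delta rk d \<Phi>"
    then have "\<exists>f. h \<in> chain rk d \<Phi> f" using DS term_chain by blast
    then show "bitlen (h i) \<le> int (d + 2) * (bitlen N + 1)"
      using bnd bitlen_bound[OF N0] by blast
  qed
  then show ?thesis using finD cardD m_def N_def by simp
qed


end
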